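(* Let $S\subseteq\mathcal{RV}$ be finite, $\mu\in\mathcal{D}(\mathrm{Mem}[S])$, and let $Y=\{y_0,\dots,y_{K-1}\}$ be distinct randomized variables. Then $Y$ satisfies NA in $\mu$ (in particular $Y\subseteq S$) if and only if for every deterministic memory $\sigma$ (with domain contained in $\mathcal{DV}$) we have $(\sigma,\mu)\models\circledast_{i=0}^{K}[y_i]$.
   Context: Variables are split into disjoint sets $\mathcal{DV}$ (deterministic) and $\mathcal{RV}$ (randomized); values are real numbers. For finite $S$, $\mathrm{Mem}[S]$ is the set of maps $S\to\mathbb{R}$ ordered pointwise; $p_A$ is restriction; $\mathcal{D}(\cdot)$ denotes countably supported probability distributions; $\mathrm{dom}(\mu)=S$ for $\mu\in\mathcal{D}(\mathrm{Mem}[S])$; $\pi_A\mu$ is the marginal on $A$; $\mu\sqsubseteq\mu'$ iff $\mathrm{dom}(\mu)\subseteq\mathrm{dom}(\mu')$ and $\pi_{\mathrm{dom}(\mu)}\mu'=\mu$. A partition is a set of pairwise disjoint nonempty sets; $\mathcal{T}$ coarsens $\mathcal{S}$ if $\bigcup\mathcal{T}=\bigcup\mathcal{S}$ and each element of $\mathcal{T}$ is a union of a subfamily of $\mathcal{S}$. $\mu$ is $\mathcal{S}$-PNA (partition $\mathcal{S}$ with $\bigcup\mathcal{S}\subseteq\mathrm{dom}\mu$) if for every $\mathcal{T}$ coarsening $\mathcal{S}$ and every family $(f_A:\mathrm{Mem}[A]\to[0,\infty))_{A\in\mathcal{T}}$ all non-decreasing or all non-increasing, $\mathbb{E}_{m\sim\mu}[\prod_Af_A(p_Am)]\le\prod_A\mathbb{E}_{m\sim\mu}[f_A(p_Am)]$.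 $\mu_1\oplus\mu_2$ (domains $S,T$) is empty if $S\cap T\ne\emptyset$, and otherwise the set of $\mu\in\mathcal{D}(\mathrm{Mem}[S\cup T])$ with $\pi_S\mu=\mu_1$, $\pi_T\mu=\mu_2$ that are $(\mathcal{S}\cup\mathcal{T})$-PNA whenever $\mathcal{S}$ partitions a subset of $S$, $\mathcal{T}$ partitions a subset of $T$, $\mu_1$ is $\mathcal{S}$-PNA and $\mu_2$ is $\mathcal{T}$-PNA. $Y$ satisfies NA in $\mu$ if $Y\subseteq\mathrm{dom}(\mu)$ and for all disjoint $A,B\subseteq Y$ and all $f:\mathrm{Mem}[A]\to\mathbb{R}$, $g:\mathrm{Mem}[B]\to\mathbb{R}$ both non-decreasing or both non-increasing, each bounded below or bounded above, $\mathbb{E}_{m\sim\mu}[f(p_Am)g(p_Bm)]\le\mathbb{E}[f(p_Am)]\mathbb{E}[g(p_Bm)]$. States are pairs $(\sigma,\mu)$ of a deterministic memory $\sigma$ and a distribution $\mu$. Satisfaction: $(\sigma,\mu)\models[y]$ iff $y\in\mathrm{dom}(\sigma)\cup\mathrm{dom}(\mu)$; $(\sigma,\mu)\models P\circledast Q$ iff there exist $\mu',\mu_1,\mu_2$ with $\mu'\sqsubseteq\mu$, $\mu'\in\mu_1\oplus\mu_2$, $(\sigma,\mu_1)\models P$ and $(\sigma,\mu_2)\models Q$. The iterated conjunction is $\circledast_{i=0}^{1}P_i=P_0$ and $\circledast_{i=0}^{N}P_i=(\circledast_{i=0}^{N-1}P_i)\circledast P_{N-1}$ for $N>1$. *)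

theory Defs
  imports "HOL-Probability.Probability"
begin

text \<open>Memories are partial maps from variables to reals: a memory in Mem[S] is a map m
  with dom m = S.  A distribution is a pmf over memories (pmfs are countably supported).\<close>

type_synonym 'v mem = "'v \<Rightarrow> real option"
type_synonym 'v dist = "'v mem pmf"

definition pdom :: "'v dist \<Rightarrow> 'v set" where
  "pdom \<mu> = dom (SOME m. m \<in> set_pmf \<mu>)"

definition is_dist :: "'v set \<Rightarrow> 'v dist \<Rightarrow> bool" where
  "is_dist S \<mu> \<longleftrightarrow> finite S \<and> (\<forall>m\<in>set_pmf \<mu>. dom m = S)"

definition wf_dist :: "'v dist \<Rightarrow> bool" where
  "wf_dist \<mu> \<longleftrightarrow> is_dist (pdom \<mu>) \<mu>"

definition marg :: "'v set \<Rightarrow> 'v dist \<Rightarrow> 'v dist" where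
  "marg A \<mu> = map_pmf (\<lambda>m. m |` A) \<mu>"

definition sub_dist :: "'v dist \<Rightarrow> 'v dist \<Rightarrow> bool" where
  "sub_dist \<mu> \<mu>' \<longleftrightarrow> pdom \<mu> \<subseteq> pdom \<mu>' \<and> marg (pdom \<mu>) \<mu>' = \<mu>"

definition mono_mem :: "'v set \<Rightarrow> ('v mem \<Rightarrow> real) \<Rightarrow> bool" where
  "mono_mem A f \<longleftrightarrow> (\<forall>m m'. dom m = A \<longrightarrow> dom m' = A \<longrightarrow>
      (\<forall>a\<in>A. the (m a) \<le> the (m' a)) \<longrightarrow> f m \<le> f m')"

definition antimono_mem :: "'v set \<Rightarrow> ('v mem \<Rightarrow> real) \<Rightarrow> bool" where
  "antimono_mem A f \<longleftrightarrow> (\<forall>m m'. dom m = A \<longrightarrow> dom m' = A \<longrightarrow>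
      (\<forall>a\<in>A. the (m a) \<le> the (m' a)) \<longrightarrow> f m' \<le> f m)"

definition is_partition :: "'v set set \<Rightarrow> bool" where
  "is_partition \<S> \<longleftrightarrow> (\<forall>A\<in>\<S>. A \<noteq> {}) \<and> (\<forall>A\<in>\<S>. \<forall>B\<in>\<S>. A \<noteq> B \<longrightarrow> A \<inter> B = {})"

definition coarsens :: "'v set set \<Rightarrow> 'v set set \<Rightarrow> bool" where
  "coarsens \<T> \<S> \<longleftrightarrow> is_partition \<T> \<and> \<Union>\<T> = \<Union>\<S> \<and>
      (\<forall>A\<in>\<T>. \<exists>\<F>\<subseteq>\<S>. A = \<Union>\<F>)"

definition PNA :: "'v set set \<Rightarrow> 'v dist \<Rightarrow> bool" where
  "PNA \<S> \<mu> \<longleftrightarrow> is_partition \<S> \<and> \<Union>\<S> \<subseteq> pdom \<mu> \<and>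
     (\<forall>\<T> (f :: 'v set \<Rightarrow> 'v mem \<Rightarrow> real). coarsens \<T> \<S> \<longrightarrow>
        (\<forall>A\<in>\<T>. \<forall>m. dom m = A \<longrightarrow> 0 \<le> f A m) \<longrightarrow>
        ((\<forall>A\<in>\<T>. mono_mem A (f A)) \<or> (\<forall>A\<in>\<T>. antimono_mem A (f A))) \<longrightarrow>
        (\<integral>\<^sup>+ m. ennreal (\<Prod>A\<in>\<T>. f A (m |` A)) \<partial>measure_pmf \<mu>)
          \<le> (\<Prod>A\<in>\<T>. \<integral>\<^sup>+ m. ennreal (f A (m |` A)) \<partial>measure_pmf \<mu>))"

definition in_oplus :: "'v dist \<Rightarrow> 'v dist \<Rightarrow> 'v dist \<Rightarrow> bool" where
  "in_oplus \<mu> \<mu>1 \<mu>2 \<longleftrightarrow> pdom \<mu>1 \<inter> pdom \<mu>2 = {} \<and>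
     is_dist (pdom \<mu>1 \<union> pdom \<mu>2) \<mu> \<and>
     marg (pdom \<mu>1) \<mu> = \<mu>1 \<and> marg (pdom \<mu>2) \<mu> = \<mu>2 \<and>
     (\<forall>\<S> \<T>. is_partition \<S> \<longrightarrow> \<Union>\<S> \<subseteq> pdom \<mu>1 \<longrightarrow>
             is_partition \<T> \<longrightarrow> \<Union>\<T> \<subseteq> pdom \<mu>2 \<longrightarrow>
             PNA \<S> \<mu>1 \<longrightarrow> PNA \<T> \<mu>2 \<longrightarrow> PNA (\<S> \<union> \<T>) \<mu>)"

definition bdd_mem :: "'v set \<Rightarrow> ('v mem \<Rightarrow> real) \<Rightarrow> bool" where
  "bdd_mem A f \<longleftrightarrow> (\<exists>c. \<forall>m. dom m = A \<longrightarrow> c \<le> f m) \<or> (\<exists>c. \<forall>m. dom m = A \<longrightarrow> f m \<le> c)"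

text \<open>Negative association (expectations taken when they exist as finite reals)\<close>
definition NA :: "'v set \<Rightarrow> 'v dist \<Rightarrow> bool" where
  "NA Y \<mu> \<longleftrightarrow> Y \<subseteq> pdom \<mu> \<and>
     (\<forall>A B (f :: 'v mem \<Rightarrow> real) (g :: 'v mem \<Rightarrow> real).
        A \<subseteq> Y \<longrightarrow> B \<subseteq> Y \<longrightarrow> A \<inter> B = {} \<longrightarrow>
        ((mono_mem A f \<and> mono_mem B g) \<or> (antimono_mem A f \<and> antimono_mem B g)) \<longrightarrow>
        bdd_mem A f \<longrightarrow> bdd_mem B g \<longrightarrow>
        integrable (measure_pmf \<mu>) (\<lambda>m. f (m |` A)) \<longrightarrow>
        integrable (measure_pmf \<mu>) (\<lambda>m. g (m |` B)) \<longrightarrow>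
        integrable (measure_pmf \<mu>) (\<lambda>m. f (m |` A) * g (m |` B)) \<longrightarrow>
        measure_pmf.expectation \<mu> (\<lambda>m. f (m |` A) * g (m |` B))
          \<le> measure_pmf.expectation \<mu> (\<lambda>m. f (m |` A)) * measure_pmf.expectation \<mu> (\<lambda>m. g (m |` B)))"

type_synonym 'v assn = "'v mem \<Rightarrow> 'v dist \<Rightarrow> bool"

definition atom :: "'v \<Rightarrow> 'v assn" where
  "atom y \<sigma> \<mu> \<longleftrightarrow> y \<in> dom \<sigma> \<union> pdom \<mu>"

definition star :: "'v assn \<Rightarrow> 'v assn \<Rightarrow> 'v assn" where
  "star P Q \<sigma> \<mu> \<longleftrightarrow> (\<exists>\<mu>' \<mu>1 \<mu>2. wf_dist \<mu>' \<and> wf_dist \<mu>1 \<and> wf_dist \<mu>2 \<and>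
      sub_dist \<mu>' \<mu> \<and> in_oplus \<mu>' \<mu>1 \<mu>2 \<and> P \<sigma> \<mu>1 \<and> Q \<sigma> \<mu>2)"

fun bigstar :: "(nat \<Rightarrow> 'v assn) \<Rightarrow> nat \<Rightarrow> 'v assn" where
  "bigstar P 0 = undefined"
| "bigstar P (Suc 0) = P 0"
| "bigstar P (Suc (Suc n)) = star (bigstar P (Suc n)) (P (Suc n))"

end

theory Submission
  imports Defs
begin


lemma pdom_is_dist: "is_dist S \<mu> \<Longrightarrow> pdom \<mu> = S"
  unfolding pdom_def is_dist_def
  by (metis set_pmf_not_empty ex_in_conv someI_ex)

lemma set_pmf_marg: "set_pmf (marg A \<mu>) = (\<lambda>m. m |` A) ` set_pmf \<mu>"
  by (simp add: marg_def)

lemma is_dist_marg: "is_dist S \<mu> \<Longrightarrow> is_dist (S \<inter> A) (marg A \<mu>)"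
  unfolding is_dist_def set_pmf_marg by auto

lemma marg_marg: "marg A (marg B \<mu>) = marg (B \<inter> A) \<mu>"
  by (simp add: marg_def map_pmf_comp)

lemma nn_marg: "(\<And>m. h (m |` P) = h m) \<Longrightarrow>
   (\<integral>\<^sup>+ m. h m \<partial>measure_pmf (marg P \<mu>)) = (\<integral>\<^sup>+ m. h m \<partial>measure_pmf \<mu>)"
  by (simp add: marg_def)

lemma int_marg: "(\<And>m. h (m |` P) = h m) \<Longrightarrow>
   measure_pmf.expectation (marg P \<mu>) (h::_\<Rightarrow>real) = measure_pmf.expectation \<mu> h"
  by (simp add: marg_def)

lemma integrable_marg: "(\<And>m. h (m |` P) = h m) \<Longrightarrow>
   integrable (measure_pmf (marg P \<mu>)) (h::_\<Rightarrow>real) = integrable (measure_pmf \<mu>) h"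
  by (simp add: marg_def)

lemma coarsens_sub: "coarsens T Sp \<Longrightarrow> A \<in> T \<Longrightarrow> A \<subseteq> \<Union>Sp"
  unfolding coarsens_def by auto

lemma PNA_sub:
  assumes "PNA Sp \<mu>'" "sub_dist \<mu>' \<mu>"
  shows "PNA Sp \<mu>"
proof -
  let ?P = "pdom \<mu>'"
  have P: "?P \<subseteq> pdom \<mu>" "marg ?P \<mu> = \<mu>'" using assms(2) unfolding sub_dist_def by auto
  have U: "\<Union>Sp \<subseteq> ?P" using assms(1) unfolding PNA_def by auto
  show ?thesis unfolding PNA_def
  proof (intro conjI allI impI)
    show "is_partition Sp" using assms(1) unfolding PNA_def by auto
    show "\<Union>Sp \<subseteq> pdom \<mu>" using U P by auto
    fix T and f :: "'a set \<Rightarrow> 'a mem \<Rightarrow> real"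
    assume c: "coarsens T Sp" and nn: "\<forall>A\<in>T. \<forall>m. dom m = A \<longrightarrow> 0 \<le> f A m"
      and mo: "(\<forall>A\<in>T. mono_mem A (f A)) \<or> (\<forall>A\<in>T. antimono_mem A (f A))"
    have sub: "\<And>A. A \<in> T \<Longrightarrow> ?P \<inter> A = A" using coarsens_sub[OF c] U by blast
    have e1: "(\<integral>\<^sup>+ m. ennreal (\<Prod>A\<in>T. f A (m |` A)) \<partial>measure_pmf (marg ?P \<mu>))
        = (\<integral>\<^sup>+ m. ennreal (\<Prod>A\<in>T. f A (m |` A)) \<partial>measure_pmf \<mu>)"
      by (rule nn_marg) (auto intro!: prod.cong simp: sub)
    have e2: "\<And>A. A \<in> T \<Longrightarrow> (\<integral>\<^sup>+ m. ennreal (f A (m |` A)) \<partial>measure_pmf (marg ?P \<mu>))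
        = (\<integral>\<^sup>+ m. ennreal (f A (m |` A)) \<partial>measure_pmf \<mu>)"
      by (rule nn_marg) (auto simp: sub)
    have "(\<integral>\<^sup>+ m. ennreal (\<Prod>A\<in>T. f A (m |` A)) \<partial>measure_pmf \<mu>')
          \<le> (\<Prod>A\<in>T. \<integral>\<^sup>+ m. ennreal (f A (m |` A)) \<partial>measure_pmf \<mu>')"
      using assms(1) c nn mo unfolding PNA_def by blast
    then show "(\<integral>\<^sup>+ m. ennreal (\<Prod>A\<in>T. f A (m |` A)) \<partial>measure_pmf \<mu>)
          \<le> (\<Prod>A\<in>T. \<integral>\<^sup>+ m. ennreal (f A (m |` A)) \<partial>measure_pmf \<mu>)"
      using e1 e2 P(2) by (simp cong: prod.cong)
  qed
qed

lemma part_single: "is_partition T \<Longrightarrow> \<Union>T = {y} \<Longrightarrow> T = {{y}}"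
proof -
  assume a: "is_partition T" "\<Union>T = {y}"
  have "\<forall>X\<in>T. X = {y}"
  proof
    fix X assume "X \<in> T"
    then have "X \<subseteq> {y}" "X \<noteq> {}" using a unfolding is_partition_def by auto
    then show "X = {y}" by auto
  qed
  moreover have "T \<noteq> {}" using a(2) by auto
  ultimately show "T = {{y}}" by auto
qed

lemma PNA_single: "y \<in> pdom \<mu> \<Longrightarrow> PNA {{y}} \<mu>"
  unfolding PNA_def
proof (intro conjI allI impI)
  fix T and f :: "'a set \<Rightarrow> 'a mem \<Rightarrow> real"
  assume "coarsens T {{y}}"
  then have "is_partition T" "\<Union>T = {y}" unfolding coarsens_def by auto
  then have "T = {{y}}" by (rule part_single)
  then show "(\<integral>\<^sup>+ m. ennreal (\<Prod>A\<in>T. f A (m |` A)) \<partial>measure_pmf \<mu>)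
          \<le> (\<Prod>A\<in>T. \<integral>\<^sup>+ m. ennreal (f A (m |` A)) \<partial>measure_pmf \<mu>)" by simp
qed (simp_all add: is_partition_def)




lemma PNA_part: "PNA S \<mu> \<Longrightarrow> is_partition S" "PNA S \<mu> \<Longrightarrow> \<Union>S \<subseteq> pdom \<mu>"
  by (simp_all add: PNA_def)

lemma bigstar_PNA:
  assumes "\<forall>i<Suc n. y i \<notin> dom \<sigma>" "bigstar (\<lambda>i. atom (y i)) (Suc n) \<sigma> \<mu>"
  shows "PNA ((\<lambda>i. {y i}) ` {..<Suc n}) \<mu>"
  using assms
proof (induction n arbitrary: \<mu>)
  case 0
  then have "y 0 \<in> pdom \<mu>" by (simp add: atom_def)
  then show ?case using PNA_single by (simp add: lessThan_Suc)
next
  case (Suc n)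
  from Suc.prems(2) obtain \<mu>' \<mu>1 \<mu>2 where st: "sub_dist \<mu>' \<mu>" "in_oplus \<mu>' \<mu>1 \<mu>2"
     "bigstar (\<lambda>i. atom (y i)) (Suc n) \<sigma> \<mu>1" "atom (y (Suc n)) \<sigma> \<mu>2"
    by (auto simp: star_def)
  have P1: "PNA ((\<lambda>i. {y i}) ` {..<Suc n}) \<mu>1" using Suc.IH[OF _ st(3)] Suc.prems(1) by auto
  have "y (Suc n) \<in> pdom \<mu>2" using st(4) Suc.prems(1) by (auto simp: atom_def)
  then have P2: "PNA {{y (Suc n)}} \<mu>2" by (rule PNA_single)
  have "PNA ((\<lambda>i. {y i}) ` {..<Suc n} \<union> {{y (Suc n)}}) \<mu>'"
  proof -
    have imp: "\<And>S T. is_partition S \<Longrightarrow> \<Union>S \<subseteq> pdom \<mu>1 \<Longrightarrow> is_partition T \<Longrightarrow> \<Union>T \<subseteq> pdom \<mu>2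
       \<Longrightarrow> PNA S \<mu>1 \<Longrightarrow> PNA T \<mu>2 \<Longrightarrow> PNA (S \<union> T) \<mu>'"
      using st(2) unfolding in_oplus_def by blast
    show ?thesis by (rule imp[OF PNA_part[OF P1] PNA_part[OF P2] P1 P2])
  qed
  then have "PNA ((\<lambda>i. {y i}) ` {..<Suc (Suc n)}) \<mu>'"
    by (simp add: lessThan_Suc insert_commute)
  then show ?case using PNA_sub st(1) by blast
qed

lemma int_bdd: "(\<forall>m. \<bar>h m\<bar> \<le> c) \<Longrightarrow> integrable (measure_pmf \<mu>) (h :: _ \<Rightarrow> real)"
  by (rule measure_pmf.integrable_const_bound[where B=c]) auto

lemma mono_restrict: "B \<subseteq> C \<Longrightarrow> mono_mem B g \<Longrightarrow> mono_mem C (\<lambda>m. g (m |` B))"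
  unfolding mono_mem_def
  unfolding mono_mem_def
proof (intro allI impI)
  fix m m' :: "'a mem"
  assume h: "B \<subseteq> C" "\<forall>m m'. dom m = B \<longrightarrow> dom m' = B \<longrightarrow> (\<forall>a\<in>B. the (m a) \<le> the (m' a)) \<longrightarrow> g m \<le> g m'"
    "dom m = C" "dom m' = C" "\<forall>a\<in>C. the (m a) \<le> the (m' a)"
  have "dom (m |` B) = B" "dom (m' |` B) = B" using h by auto
  moreover have "\<forall>a\<in>B. the ((m |` B) a) \<le> the ((m' |` B) a)" using h by auto
  ultimately show "g (m |` B) \<le> g (m' |` B)" using h(2) by blast
qed

lemma antimono_restrict: "B \<subseteq> C \<Longrightarrow> antimono_mem B g \<Longrightarrow> antimono_mem C (\<lambda>m. g (m |` B))"
  unfolding antimono_mem_def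
  unfolding antimono_mem_def
proof (intro allI impI)
  fix m m' :: "'a mem"
  assume h: "B \<subseteq> C" "\<forall>m m'. dom m = B \<longrightarrow> dom m' = B \<longrightarrow> (\<forall>a\<in>B. the (m a) \<le> the (m' a)) \<longrightarrow> g m' \<le> g m"
    "dom m = C" "dom m' = C" "\<forall>a\<in>C. the (m a) \<le> the (m' a)"
  have "dom (m |` B) = B" "dom (m' |` B) = B" using h by auto
  moreover have "\<forall>a\<in>B. the ((m |` B) a) \<le> the ((m' |` B) a)" using h by auto
  ultimately show "g (m' |` B) \<le> g (m |` B)" using h(2) by blast
qed




lemma PNA_two:
  fixes f g :: "'v mem \<Rightarrow> real"
  assumes PNA: "PNA ((\<lambda>x. {x}) ` Y) \<mu>" and AB: "A \<subseteq> Y" "B \<subseteq> Y" "A \<inter> B = {}"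
    and nf: "\<forall>m. 0 \<le> f m \<and> f m \<le> c" and ng: "\<forall>m. 0 \<le> g m \<and> g m \<le> c"
    and mo: "(mono_mem A f \<and> mono_mem B g) \<or> (antimono_mem A f \<and> antimono_mem B g)"
  shows "measure_pmf.expectation \<mu> (\<lambda>m. f (m |` A) * g (m |` B))
     \<le> measure_pmf.expectation \<mu> (\<lambda>m. f (m |` A)) * measure_pmf.expectation \<mu> (\<lambda>m. g (m |` B))"
proof (cases "A = {} \<or> B = {}")
  case True
  then show ?thesis by auto
next
  case False
  define T where "T = {A, Y - A}"
  define F where "F = (\<lambda>X. if X = A then f else (\<lambda>m. g (m |` B)))"
  have ne: "A \<noteq> {}" "Y - A \<noteq> {}" "A \<noteq> Y - A" using False AB by auto
  have co: "coarsens T ((\<lambda>x. {x}) ` Y)"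
    unfolding coarsens_def is_partition_def T_def
  proof (intro conjI ballI impI)
    fix X assume "X \<in> {A, Y - A}"
    then have "X \<subseteq> Y" using AB by auto
    then show "\<exists>\<F>\<subseteq>(\<lambda>x. {x}) ` Y. X = \<Union> \<F>"
      by (intro exI[of _ "(\<lambda>x. {x}) ` X"]) auto
  qed (use ne AB in auto)
  have nn: "\<forall>X\<in>T. \<forall>m. dom m = X \<longrightarrow> 0 \<le> F X m" using nf ng by (auto simp: F_def)
  have BY: "B \<subseteq> Y - A" using AB by auto
  have mo': "(\<forall>X\<in>T. mono_mem X (F X)) \<or> (\<forall>X\<in>T. antimono_mem X (F X))"
    using mo mono_restrict[OF BY] antimono_restrict[OF BY] ne(3) by (auto simp: T_def F_def)
  have ineq: "(\<integral>\<^sup>+ m. ennreal (\<Prod>X\<in>T. F X (m |` X)) \<partial>measure_pmf \<mu>)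
          \<le> (\<Prod>X\<in>T. \<integral>\<^sup>+ m. ennreal (F X (m |` X)) \<partial>measure_pmf \<mu>)"
    using PNA co nn mo' unfolding PNA_def by blast
  have BA: "(Y - A) \<inter> B = B" using BY by auto
  have eq1: "\<And>m. (\<Prod>X\<in>T. F X (m |` X)) = f (m |` A) * g (m |` B)"
    using ne(3) by (simp add: T_def F_def BA)
  have eq2: "(\<Prod>X\<in>T. \<integral>\<^sup>+ m. ennreal (F X (m |` X)) \<partial>measure_pmf \<mu>)
     = (\<integral>\<^sup>+ m. ennreal (f (m |` A)) \<partial>measure_pmf \<mu>) * (\<integral>\<^sup>+ m. ennreal (g (m |` B)) \<partial>measure_pmf \<mu>)"
    using ne(3) by (simp add: T_def F_def BA)
  have ineq2: "(\<integral>\<^sup>+ m. ennreal (f (m |` A) * g (m |` B)) \<partial>measure_pmf \<mu>)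
     \<le> (\<integral>\<^sup>+ m. ennreal (f (m |` A)) \<partial>measure_pmf \<mu>) * (\<integral>\<^sup>+ m. ennreal (g (m |` B)) \<partial>measure_pmf \<mu>)"
    using ineq by (simp only: eq1 eq2)
  have i1: "integrable (measure_pmf \<mu>) (\<lambda>m. f (m |` A))" using nf by (intro int_bdd[where c=c]) auto
  have i2: "integrable (measure_pmf \<mu>) (\<lambda>m. g (m |` B))" using ng by (intro int_bdd[where c=c]) auto
  have i3: "integrable (measure_pmf \<mu>) (\<lambda>m. f (m |` A) * g (m |` B))"
  proof (intro int_bdd[where c="c*c"] allI)
    fix m
    have a: "0 \<le> f (m |` A)" "f (m |` A) \<le> c" "0 \<le> g (m |` B)" "g (m |` B) \<le> c" using nf ng by auto
    then have "f (m |` A) * g (m |` B) \<le> c * c" by (intro mult_mono) auto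
    then show "\<bar>f (m |` A) * g (m |` B)\<bar> \<le> c * c" using a by simp
  qed
  have e1: "(\<integral>\<^sup>+ m. ennreal (f (m |` A) * g (m |` B)) \<partial>measure_pmf \<mu>)
     = ennreal (measure_pmf.expectation \<mu> (\<lambda>m. f (m |` A) * g (m |` B)))"
    using i3 nf ng by (intro nn_integral_eq_integral) auto
  have e2: "(\<integral>\<^sup>+ m. ennreal (f (m |` A)) \<partial>measure_pmf \<mu>) = ennreal (measure_pmf.expectation \<mu> (\<lambda>m. f (m |` A)))"
    using i1 nf by (intro nn_integral_eq_integral) auto
  have e3: "(\<integral>\<^sup>+ m. ennreal (g (m |` B)) \<partial>measure_pmf \<mu>) = ennreal (measure_pmf.expectation \<mu> (\<lambda>m. g (m |` B)))"
    using i2 ng by (intro nn_integral_eq_integral) auto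
  have p1: "0 \<le> measure_pmf.expectation \<mu> (\<lambda>m. f (m |` A))" using nf by (intro integral_nonneg_AE) auto
  have p2: "0 \<le> measure_pmf.expectation \<mu> (\<lambda>m. g (m |` B))" using ng by (intro integral_nonneg_AE) auto
  show ?thesis using ineq2 unfolding e1 e2 e3
    by (simp add: ennreal_mult[symmetric] p1 p2 ennreal_le_iff mult_nonneg_nonneg)
qed




definition tr :: "nat \<Rightarrow> real \<Rightarrow> real" where
  "tr n x = max (- real n) (min x (real n))"

lemma tr_mono: "x \<le> y \<Longrightarrow> tr n x \<le> tr n y"
  unfolding tr_def by linarith

lemma tr_abs: "\<bar>tr n x\<bar> \<le> \<bar>x\<bar>"
  unfolding tr_def by linarith

lemma tr_bnd: "0 \<le> tr n x + real n \<and> tr n x + real n \<le> 2 * real n"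
  unfolding tr_def by linarith

lemma tr_lim: "(\<lambda>n. tr n x) \<longlonglongrightarrow> x"
proof (rule tendsto_eventually)
  show "\<forall>\<^sub>F n in sequentially. tr n x = x"
  proof (rule eventually_sequentiallyI[of "nat \<lceil>\<bar>x\<bar>\<rceil>"])
    fix n assume "nat \<lceil>\<bar>x\<bar>\<rceil> \<le> n"
    then have "\<bar>x\<bar> \<le> real n" by linarith
    then show "tr n x = x" unfolding tr_def by linarith
  qed
qed

lemma mono_tr: "mono_mem A f \<Longrightarrow> mono_mem A (\<lambda>m. tr n (f m) + real n)"
  unfolding mono_mem_def using tr_mono by (smt (verit))

lemma antimono_tr: "antimono_mem A f \<Longrightarrow> antimono_mem A (\<lambda>m. tr n (f m) + real n)"
  unfolding antimono_mem_def using tr_mono by (smt (verit))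

lemma cov_shift:
  fixes a b :: "'a \<Rightarrow> real"
  assumes ia: "integrable (measure_pmf \<mu>) a" and ib: "integrable (measure_pmf \<mu>) b"
    and iab: "integrable (measure_pmf \<mu>) (\<lambda>m. a m * b m)"
    and le: "measure_pmf.expectation \<mu> (\<lambda>m. (a m + c) * (b m + c))
      \<le> measure_pmf.expectation \<mu> (\<lambda>m. a m + c) * measure_pmf.expectation \<mu> (\<lambda>m. b m + c)"
  shows "measure_pmf.expectation \<mu> (\<lambda>m. a m * b m)
      \<le> measure_pmf.expectation \<mu> a * measure_pmf.expectation \<mu> b"
proof -
  have eq: "(\<lambda>m. (a m + c) * (b m + c)) = (\<lambda>m. a m * b m + (c * a m + (c * b m + c * c)))"
    by (auto simp: algebra_simps)
  have "measure_pmf.expectation \<mu> (\<lambda>m. (a m + c) * (b m + c))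
     = measure_pmf.expectation \<mu> (\<lambda>m. a m * b m) + (c * measure_pmf.expectation \<mu> a + (c * measure_pmf.expectation \<mu> b + c * c))"
    unfolding eq using ia ib iab by (simp add: integral_add)
  moreover have "measure_pmf.expectation \<mu> (\<lambda>m. a m + c) = measure_pmf.expectation \<mu> a + c"
    using ia by (simp add: integral_add)
  moreover have "measure_pmf.expectation \<mu> (\<lambda>m. b m + c) = measure_pmf.expectation \<mu> b + c"
    using ib by (simp add: integral_add)
  ultimately show ?thesis using le by (simp add: algebra_simps)
qed




lemma tr_le: "\<bar>tr n x\<bar> \<le> real n"
  unfolding tr_def by linarith

lemma PNA_NA:
  assumes P: "PNA ((\<lambda>x. {x}) ` Y) \<mu>"
  shows "NA Y \<mu>"
  unfolding NA_def
proof (intro conjI allI impI)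
  show "Y \<subseteq> pdom \<mu>" using PNA_part(2)[OF P] by auto
  fix A B and f g :: "'a mem \<Rightarrow> real"
  assume AB: "A \<subseteq> Y" "B \<subseteq> Y" "A \<inter> B = {}"
    and mo: "mono_mem A f \<and> mono_mem B g \<or> antimono_mem A f \<and> antimono_mem B g"
    and i1: "integrable (measure_pmf \<mu>) (\<lambda>m. f (m |` A))"
    and i2: "integrable (measure_pmf \<mu>) (\<lambda>m. g (m |` B))"
    and i3: "integrable (measure_pmf \<mu>) (\<lambda>m. f (m |` A) * g (m |` B))"
  define a where "a n m = tr n (f (m |` A))" for n m
  define b where "b n m = tr n (g (m |` B))" for n m
  have ia: "integrable (measure_pmf \<mu>) (a n)" for n
    unfolding a_def by (intro int_bdd[where c="real n"]) (simp add: tr_le)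
  have ib: "integrable (measure_pmf \<mu>) (b n)" for n
    unfolding b_def by (intro int_bdd[where c="real n"]) (simp add: tr_le)
  have iab: "integrable (measure_pmf \<mu>) (\<lambda>m. a n m * b n m)" for n
  proof (intro int_bdd[where c="real n * real n"] allI)
    fix m show "\<bar>a n m * b n m\<bar> \<le> real n * real n"
      unfolding a_def b_def abs_mult by (intro mult_mono tr_le) auto
  qed
  have key: "measure_pmf.expectation \<mu> (\<lambda>m. a n m * b n m)
      \<le> measure_pmf.expectation \<mu> (a n) * measure_pmf.expectation \<mu> (b n)" for n
  proof (rule cov_shift[OF ia ib iab, where c="real n"])
    have mo': "(mono_mem A (\<lambda>m. tr n (f m) + real n) \<and> mono_mem B (\<lambda>m. tr n (g m) + real n)) \<or>
       (antimono_mem A (\<lambda>m. tr n (f m) + real n) \<and> antimono_mem B (\<lambda>m. tr n (g m) + real n))"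
      using mo mono_tr antimono_tr by blast
    show "measure_pmf.expectation \<mu> (\<lambda>m. (a n m + real n) * (b n m + real n))
      \<le> measure_pmf.expectation \<mu> (\<lambda>m. a n m + real n) * measure_pmf.expectation \<mu> (\<lambda>m. b n m + real n)"
      unfolding a_def b_def
      by (rule PNA_two[OF P AB _ _ mo', where c="2 * real n"]) (simp_all add: tr_bnd)
  qed
  have L1: "(\<lambda>n. measure_pmf.expectation \<mu> (a n)) \<longlonglongrightarrow> measure_pmf.expectation \<mu> (\<lambda>m. f (m |` A))"
    by (rule integral_dominated_convergence[where w="\<lambda>m. \<bar>f (m |` A)\<bar>"])
       (auto simp: a_def tr_abs tr_lim i1)
  have L2: "(\<lambda>n. measure_pmf.expectation \<mu> (b n)) \<longlonglongrightarrow> measure_pmf.expectation \<mu> (\<lambda>m. g (m |` B))"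
    by (rule integral_dominated_convergence[where w="\<lambda>m. \<bar>g (m |` B)\<bar>"])
       (auto simp: b_def tr_abs tr_lim i2)
  have L3: "(\<lambda>n. measure_pmf.expectation \<mu> (\<lambda>m. a n m * b n m)) \<longlonglongrightarrow>
       measure_pmf.expectation \<mu> (\<lambda>m. f (m |` A) * g (m |` B))"
  proof (rule integral_dominated_convergence[where w="\<lambda>m. \<bar>f (m |` A) * g (m |` B)\<bar>"])
    show "integrable (measure_pmf \<mu>) (\<lambda>m. \<bar>f (m |` A) * g (m |` B)\<bar>)" using i3 by auto
    show "AE x in measure_pmf \<mu>. (\<lambda>i. a i x * b i x) \<longlonglongrightarrow> f (x |` A) * g (x |` B)"
      unfolding a_def b_def by (intro AE_I2 tendsto_mult tr_lim)
    show "AE x in measure_pmf \<mu>. norm (a i x * b i x) \<le> \<bar>f (x |` A) * g (x |` B)\<bar>" for i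
      unfolding a_def b_def abs_mult by (intro AE_I2) (simp add: abs_mult mult_mono tr_abs)
  qed auto
  show "measure_pmf.expectation \<mu> (\<lambda>m. f (m |` A) * g (m |` B))
     \<le> measure_pmf.expectation \<mu> (\<lambda>m. f (m |` A)) * measure_pmf.expectation \<mu> (\<lambda>m. g (m |` B))"
    by (rule LIMSEQ_le[OF L3 tendsto_mult[OF L1 L2]]) (use key in auto)
qed




lemma NA_app:
  fixes f g :: "'a mem \<Rightarrow> real"
  assumes "NA Y \<mu>" "A \<subseteq> Y" "B \<subseteq> Y" "A \<inter> B = {}"
   "(mono_mem A f \<and> mono_mem B g) \<or> (antimono_mem A f \<and> antimono_mem B g)"
   "bdd_mem A f" "bdd_mem B g"
   "integrable (measure_pmf \<mu>) (\<lambda>m. f (m |` A))"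
   "integrable (measure_pmf \<mu>) (\<lambda>m. g (m |` B))"
   "integrable (measure_pmf \<mu>) (\<lambda>m. f (m |` A) * g (m |` B))"
  shows "measure_pmf.expectation \<mu> (\<lambda>m. f (m |` A) * g (m |` B))
     \<le> measure_pmf.expectation \<mu> (\<lambda>m. f (m |` A)) * measure_pmf.expectation \<mu> (\<lambda>m. g (m |` B))"
  using assms(1) unfolding NA_def
  apply (elim conjE)
  apply (erule allE[of _ A], erule allE[of _ B], erule allE[of _ f], erule allE[of _ g])
  using assms(2-) by blast

lemma NA_mono: "NA Y \<mu> \<Longrightarrow> Y' \<subseteq> Y \<Longrightarrow> NA Y' \<mu>"
  apply (subst NA_def)
  apply (intro conjI allI impI)
   apply (simp add: NA_def)
   apply blast
  apply (rule NA_app)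
  by assumption+ blast+

lemma NA_marg:
  assumes na: "NA Y \<mu>" and d: "is_dist S \<mu>" and YP: "Y \<subseteq> P"
  shows "NA Y (marg P \<mu>)"
  unfolding NA_def
proof (intro conjI allI impI)
  have "pdom (marg P \<mu>) = S \<inter> P" using pdom_is_dist[OF is_dist_marg[OF d]] .
  moreover have "Y \<subseteq> S" using na pdom_is_dist[OF d] unfolding NA_def by auto
  ultimately show "Y \<subseteq> pdom (marg P \<mu>)" using YP by auto
  fix A B and f g :: "'a mem \<Rightarrow> real"
  assume AB: "A \<subseteq> Y" "B \<subseteq> Y" "A \<inter> B = {}"
    and mo: "mono_mem A f \<and> mono_mem B g \<or> antimono_mem A f \<and> antimono_mem B g"
    and bf: "bdd_mem A f" and bg: "bdd_mem B g"
    and i1: "integrable (measure_pmf (marg P \<mu>)) (\<lambda>m. f (m |` A))"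
    and i2: "integrable (measure_pmf (marg P \<mu>)) (\<lambda>m. g (m |` B))"
    and i3: "integrable (measure_pmf (marg P \<mu>)) (\<lambda>m. f (m |` A) * g (m |` B))"
  have PA: "P \<inter> A = A" "P \<inter> B = B" using AB YP by auto
  have j1: "integrable (measure_pmf (marg P \<mu>)) (\<lambda>m. f (m |` A)) = integrable (measure_pmf \<mu>) (\<lambda>m. f (m |` A))"
    by (rule integrable_marg) (simp add: PA)
  have j2: "integrable (measure_pmf (marg P \<mu>)) (\<lambda>m. g (m |` B)) = integrable (measure_pmf \<mu>) (\<lambda>m. g (m |` B))"
    by (rule integrable_marg) (simp add: PA)
  have j3: "integrable (measure_pmf (marg P \<mu>)) (\<lambda>m. f (m |` A) * g (m |` B)) = integrable (measure_pmf \<mu>) (\<lambda>m. f (m |` A) * g (m |` B))"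
    by (rule integrable_marg) (simp add: PA)
  have k1: "measure_pmf.expectation (marg P \<mu>) (\<lambda>m. f (m |` A)) = measure_pmf.expectation \<mu> (\<lambda>m. f (m |` A))"
    by (rule int_marg) (simp add: PA)
  have k2: "measure_pmf.expectation (marg P \<mu>) (\<lambda>m. g (m |` B)) = measure_pmf.expectation \<mu> (\<lambda>m. g (m |` B))"
    by (rule int_marg) (simp add: PA)
  have k3: "measure_pmf.expectation (marg P \<mu>) (\<lambda>m. f (m |` A) * g (m |` B)) = measure_pmf.expectation \<mu> (\<lambda>m. f (m |` A) * g (m |` B))"
    by (rule int_marg) (simp add: PA)
  have "measure_pmf.expectation \<mu> (\<lambda>m. f (m |` A) * g (m |` B))
     \<le> measure_pmf.expectation \<mu> (\<lambda>m. f (m |` A)) * measure_pmf.expectation \<mu> (\<lambda>m. g (m |` B))"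
    using NA_app[OF na AB mo bf bg] i1 i2 i3 unfolding j1 j2 j3 by blast
  then show "measure_pmf.expectation (marg P \<mu>) (\<lambda>m. f (m |` A) * g (m |` B))
     \<le> measure_pmf.expectation (marg P \<mu>) (\<lambda>m. f (m |` A)) * measure_pmf.expectation (marg P \<mu>) (\<lambda>m. g (m |` B))"
    unfolding k1 k2 k3 .
qed




lemma sup_min:
  assumes "0 \<le> x" "0 \<le> y"
  shows "ennreal (x * y) = (SUP n. ennreal (min x (real n) * min y (real n)))"
proof (rule antisym)
  define N where "N = nat \<lceil>max x y\<rceil>"
  have "min x (real N) = x" "min y (real N) = y" unfolding N_def by linarith+
  then show "ennreal (x * y) \<le> (SUP n. ennreal (min x (real n) * min y (real n)))"
    by (intro SUP_upper2[where i=N]) auto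
  show "(SUP n. ennreal (min x (real n) * min y (real n))) \<le> ennreal (x * y)"
    using assms by (intro SUP_least ennreal_leI mult_mono) auto
qed

lemma mono_min: "mono_mem A f \<Longrightarrow> mono_mem A (\<lambda>m. min (f m) c)"
  unfolding mono_mem_def by (blast intro: min.mono order_refl)

lemma antimono_min: "antimono_mem A f \<Longrightarrow> antimono_mem A (\<lambda>m. min (f m) c)"
  unfolding antimono_mem_def by (blast intro: min.mono order_refl)

lemma NA_nn:
  fixes f g :: "'a mem \<Rightarrow> real"
  assumes na: "NA Y \<mu>" and AB: "A \<subseteq> Y" "B \<subseteq> Y" "A \<inter> B = {}"
    and nf: "\<forall>m. 0 \<le> f m" and ng: "\<forall>m. 0 \<le> g m"
    and mo: "(mono_mem A f \<and> mono_mem B g) \<or> (antimono_mem A f \<and> antimono_mem B g)"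
  shows "(\<integral>\<^sup>+ m. ennreal (f (m |` A) * g (m |` B)) \<partial>measure_pmf \<mu>)
     \<le> (\<integral>\<^sup>+ m. ennreal (f (m |` A)) \<partial>measure_pmf \<mu>) * (\<integral>\<^sup>+ m. ennreal (g (m |` B)) \<partial>measure_pmf \<mu>)"
proof -
  define h where "h n m = ennreal (min (f (m |` A)) (real n) * min (g (m |` B)) (real n))" for n m
  have step: "integral\<^sup>N (measure_pmf \<mu>) (h n)
     \<le> (\<integral>\<^sup>+ m. ennreal (f (m |` A)) \<partial>measure_pmf \<mu>) * (\<integral>\<^sup>+ m. ennreal (g (m |` B)) \<partial>measure_pmf \<mu>)" for n
  proof -
    let ?f = "\<lambda>m. min (f m) (real n)" and ?g = "\<lambda>m. min (g m) (real n)"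
    have i1: "integrable (measure_pmf \<mu>) (\<lambda>m. ?f (m |` A))"
      using nf by (intro int_bdd[where c="real n"]) auto
    have i2: "integrable (measure_pmf \<mu>) (\<lambda>m. ?g (m |` B))"
      using ng by (intro int_bdd[where c="real n"]) auto
    have i3: "integrable (measure_pmf \<mu>) (\<lambda>m. ?f (m |` A) * ?g (m |` B))"
    proof (intro int_bdd[where c="real n * real n"] allI)
      fix m
      have a: "0 \<le> ?f (m |` A)" "?f (m |` A) \<le> real n" "0 \<le> ?g (m |` B)" "?g (m |` B) \<le> real n"
        using nf ng by auto
      then have "?f (m |` A) * ?g (m |` B) \<le> real n * real n" by (intro mult_mono) auto
      then show "\<bar>?f (m |` A) * ?g (m |` B)\<bar> \<le> real n * real n" using a by simp
    qed
    have mo': "(mono_mem A ?f \<and> mono_mem B ?g) \<or> (antimono_mem A ?f \<and> antimono_mem B ?g)"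
      using mo mono_min antimono_min by blast
    have bf: "bdd_mem A ?f" using nf unfolding bdd_mem_def by auto
    have bg: "bdd_mem B ?g" using ng unfolding bdd_mem_def by auto
    have le: "measure_pmf.expectation \<mu> (\<lambda>m. ?f (m |` A) * ?g (m |` B))
     \<le> measure_pmf.expectation \<mu> (\<lambda>m. ?f (m |` A)) * measure_pmf.expectation \<mu> (\<lambda>m. ?g (m |` B))"
      using NA_app[OF na AB mo' bf bg i1 i2 i3] .
    have e1: "integral\<^sup>N (measure_pmf \<mu>) (h n) = ennreal (measure_pmf.expectation \<mu> (\<lambda>m. ?f (m |` A) * ?g (m |` B)))"
      unfolding h_def using i3 nf ng by (intro nn_integral_eq_integral) auto
    have e2: "(\<integral>\<^sup>+ m. ennreal (?f (m |` A)) \<partial>measure_pmf \<mu>) = ennreal (measure_pmf.expectation \<mu> (\<lambda>m. ?f (m |` A)))"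
      using i1 nf by (intro nn_integral_eq_integral) auto
    have e3: "(\<integral>\<^sup>+ m. ennreal (?g (m |` B)) \<partial>measure_pmf \<mu>) = ennreal (measure_pmf.expectation \<mu> (\<lambda>m. ?g (m |` B)))"
      using i2 ng by (intro nn_integral_eq_integral) auto
    have p1: "0 \<le> measure_pmf.expectation \<mu> (\<lambda>m. ?f (m |` A))" using nf by (intro integral_nonneg_AE) auto
    have p2: "0 \<le> measure_pmf.expectation \<mu> (\<lambda>m. ?g (m |` B))" using ng by (intro integral_nonneg_AE) auto
    have "integral\<^sup>N (measure_pmf \<mu>) (h n)
       \<le> (\<integral>\<^sup>+ m. ennreal (?f (m |` A)) \<partial>measure_pmf \<mu>) * (\<integral>\<^sup>+ m. ennreal (?g (m |` B)) \<partial>measure_pmf \<mu>)"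
      unfolding e1 e2 e3 using le p1 p2 by (simp add: ennreal_mult[symmetric] ennreal_leI)
    also have "\<dots> \<le> (\<integral>\<^sup>+ m. ennreal (f (m |` A)) \<partial>measure_pmf \<mu>) * (\<integral>\<^sup>+ m. ennreal (g (m |` B)) \<partial>measure_pmf \<mu>)"
      by (intro mult_mono nn_integral_mono ennreal_leI) auto
    finally show ?thesis .
  qed
  have inc: "incseq h"
    unfolding incseq_def le_fun_def h_def
    using nf ng by (auto intro!: ennreal_leI mult_mono)
  have "(\<integral>\<^sup>+ m. ennreal (f (m |` A) * g (m |` B)) \<partial>measure_pmf \<mu>) = (\<integral>\<^sup>+ m. (SUP n. h n m) \<partial>measure_pmf \<mu>)"
    unfolding h_def using nf ng by (intro nn_integral_cong sup_min) auto
  also have "\<dots> = (SUP n. integral\<^sup>N (measure_pmf \<mu>) (h n))"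
    by (rule nn_integral_monotone_convergence_SUP[OF inc]) simp
  also have "\<dots> \<le> (\<integral>\<^sup>+ m. ennreal (f (m |` A)) \<partial>measure_pmf \<mu>) * (\<integral>\<^sup>+ m. ennreal (g (m |` B)) \<partial>measure_pmf \<mu>)"
    by (intro SUP_least step)
  finally show ?thesis .
qed




lemma ennreal_max0: "ennreal (max 0 x) = ennreal x"
  by (cases "x \<le> 0") (auto simp: ennreal_neg max_def)

lemma mono_max: "mono_mem A f \<Longrightarrow> mono_mem A (\<lambda>m. max 0 (f m))"
  unfolding mono_mem_def
  apply (intro allI impI)
  apply (rule max.mono[OF order_refl])
  by blast

lemma antimono_max: "antimono_mem A f \<Longrightarrow> antimono_mem A (\<lambda>m. max 0 (f m))"
  unfolding antimono_mem_def
  apply (intro allI impI)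
  apply (rule max.mono[OF order_refl])
  by blast

lemma mono_const: "mono_mem A (\<lambda>_. c)" "antimono_mem A (\<lambda>_. c)"
  unfolding mono_mem_def antimono_mem_def by auto

lemma mono_prod:
  assumes "finite T0" "\<forall>X\<in>T0. X \<subseteq> C" "\<forall>X\<in>T0. mono_mem X (F X)"
  shows "mono_mem C (\<lambda>m. \<Prod>X\<in>T0. max 0 (F X (m |` X)))"
  unfolding mono_mem_def
proof (intro allI impI)
  fix m m' :: "'a mem"
  assume h: "dom m = C" "dom m' = C" "\<forall>a\<in>C. the (m a) \<le> the (m' a)"
  show "(\<Prod>X\<in>T0. max 0 (F X (m |` X))) \<le> (\<Prod>X\<in>T0. max 0 (F X (m' |` X)))"
  proof (rule prod_mono)
    fix X assume X: "X \<in> T0"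
    have "mono_mem C (\<lambda>m. F X (m |` X))" using mono_restrict[of X C "F X"] assms X by simp
    then have "F X (m |` X) \<le> F X (m' |` X)" using h unfolding mono_mem_def by simp
    then show "0 \<le> max 0 (F X (m |` X)) \<and> max 0 (F X (m |` X)) \<le> max 0 (F X (m' |` X))" by auto
  qed
qed

lemma antimono_prod:
  assumes "finite T0" "\<forall>X\<in>T0. X \<subseteq> C" "\<forall>X\<in>T0. antimono_mem X (F X)"
  shows "antimono_mem C (\<lambda>m. \<Prod>X\<in>T0. max 0 (F X (m |` X)))"
  unfolding antimono_mem_def
proof (intro allI impI)
  fix m m' :: "'a mem"
  assume h: "dom m = C" "dom m' = C" "\<forall>a\<in>C. the (m a) \<le> the (m' a)"
  show "(\<Prod>X\<in>T0. max 0 (F X (m' |` X))) \<le> (\<Prod>X\<in>T0. max 0 (F X (m |` X)))"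
  proof (rule prod_mono)
    fix X assume X: "X \<in> T0"
    have "antimono_mem C (\<lambda>m. F X (m |` X))" using antimono_restrict[of X C "F X"] assms X by simp
    then have "F X (m' |` X) \<le> F X (m |` X)" using h unfolding antimono_mem_def by simp
    then show "0 \<le> max 0 (F X (m' |` X)) \<and> max 0 (F X (m' |` X)) \<le> max 0 (F X (m |` X))" by auto
  qed
qed




lemma PNA_app:
  assumes "PNA S \<mu>" "coarsens T S" "\<forall>A\<in>T. \<forall>m. dom m = A \<longrightarrow> 0 \<le> f A m"
     "(\<forall>A\<in>T. mono_mem A (f A)) \<or> (\<forall>A\<in>T. antimono_mem A (f A))"
  shows "(\<integral>\<^sup>+ m. ennreal (\<Prod>A\<in>T. f A (m |` A)) \<partial>measure_pmf \<mu>)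
          \<le> (\<Prod>A\<in>T. \<integral>\<^sup>+ m. ennreal (f A (m |` A)) \<partial>measure_pmf \<mu>)"
  using assms(1) unfolding PNA_def
  apply (elim conjE)
  apply (erule allE[of _ T], erule allE[of _ f])
  using assms(2-) by blast

lemma PNA_extend:
  fixes \<mu>' :: "'a dist"
  assumes na: "NA (insert y Z) \<mu>'" and d: "is_dist (insert y Z) \<mu>'" and yZ: "y \<notin> Z"
    and P1: "PNA Sp (marg Z \<mu>')"
  shows "PNA (Sp \<union> {{y}}) \<mu>'"
proof -
  define Y where "Y = insert y Z"
  define \<mu>1 where "\<mu>1 = marg Z \<mu>'"
  have finY: "finite Y" using d unfolding is_dist_def Y_def by auto
  have pd': "pdom \<mu>' = Y" using pdom_is_dist[OF d] Y_def by simp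
  have pd1: "pdom \<mu>1 = Z" using pdom_is_dist[OF is_dist_marg[OF d, of Z]] unfolding \<mu>1_def by auto
  have partS: "is_partition Sp" using PNA_part(1)[OF P1] .
  have USZ: "\<Union>Sp \<subseteq> Z" using PNA_part(2)[OF P1] pd1 unfolding \<mu>1_def by simp
  have yS: "y \<notin> \<Union>Sp" using USZ yZ by auto
  have supp: "\<And>m. m \<in> set_pmf \<mu>' \<Longrightarrow> dom m = Y" using d unfolding is_dist_def Y_def by auto
  show ?thesis unfolding PNA_def
  proof (intro conjI allI impI)
    show "is_partition (Sp \<union> {{y}})"
      unfolding is_partition_def
    proof (intro conjI ballI impI)
      fix A assume "A \<in> Sp \<union> {{y}}" then show "A \<noteq> {}" using partS unfolding is_partition_def by auto
    next
      fix A B assume AB: "A \<in> Sp \<union> {{y}}" "B \<in> Sp \<union> {{y}}" "A \<noteq> B"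
      have pd: "\<forall>A\<in>Sp. \<forall>B\<in>Sp. A \<noteq> B \<longrightarrow> A \<inter> B = {}" using partS unfolding is_partition_def by blast
      show "A \<inter> B = {}"
      proof (cases "A = {y}")
        case True
        then have "B \<in> Sp" using AB by auto
        then show ?thesis using True yS by auto
      next
        case False
        then have A: "A \<in> Sp" using AB by auto
        show ?thesis
        proof (cases "B = {y}")
          case True then show ?thesis using A yS by auto
        next
          case False
          then have "B \<in> Sp" using AB by auto
          then show ?thesis using pd A AB(3) by simp
        qed
      qed
    qed
    show "\<Union>(Sp \<union> {{y}}) \<subseteq> pdom \<mu>'" using USZ pd' Y_def by auto
    fix T and f :: "'a set \<Rightarrow> 'a mem \<Rightarrow> real"
    assume co: "coarsens T (Sp \<union> {{y}})" and nn: "\<forall>A\<in>T. \<forall>m. dom m = A \<longrightarrow> 0 \<le> f A m"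
      and mo: "(\<forall>A\<in>T. mono_mem A (f A)) \<or> (\<forall>A\<in>T. antimono_mem A (f A))"
    have partT: "is_partition T" and UT: "\<Union>T = \<Union>Sp \<union> {y}"
      and fam: "\<forall>A\<in>T. \<exists>F\<subseteq>Sp \<union> {{y}}. A = \<Union>F" using co unfolding coarsens_def by auto
    have TY: "\<Union>T \<subseteq> Y" using UT USZ Y_def by auto
    have finT: "finite T"
      by (rule finite_subset[of T "Pow Y"]) (use TY finY in auto)
    obtain B where B: "B \<in> T" "y \<in> B" using UT by auto
    define T0 where "T0 = T - {B}"
    define C where "C = \<Union>T0"
    define B0 where "B0 = B - {y}"
    have disj: "\<And>X X'. X \<in> T \<Longrightarrow> X' \<in> T \<Longrightarrow> X \<noteq> X' \<Longrightarrow> X \<inter> X' = {}"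
      using partT unfolding is_partition_def by blast
    have nonemp: "\<And>X. X \<in> T \<Longrightarrow> X \<noteq> {}" using partT unfolding is_partition_def by blast
    have finT0: "finite T0" using finT T0_def by auto
    have yX: "\<And>X. X \<in> T0 \<Longrightarrow> y \<notin> X" using disj B unfolding T0_def by blast
    have BC: "B \<inter> C = {}" using disj B unfolding C_def T0_def by blast
    have XS: "\<And>X. X \<in> T0 \<Longrightarrow> X \<subseteq> \<Union>Sp" using UT yX unfolding T0_def by blast
    have XZ: "\<And>X. X \<in> T0 \<Longrightarrow> X \<subseteq> Z" using XS USZ by blast
    have XC: "\<And>X. X \<in> T0 \<Longrightarrow> X \<subseteq> C" unfolding C_def by blast
    have BY: "B \<subseteq> Y" "C \<subseteq> Y" using TY B unfolding C_def T0_def by auto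
    have B0T0: "B0 \<noteq> {} \<Longrightarrow> B0 \<notin> T0"
    proof
      assume "B0 \<noteq> {}" "B0 \<in> T0"
      then have "B0 \<inter> B = {}" using disj B unfolding T0_def by blast
      then show False using \<open>B0 \<noteq> {}\<close> unfolding B0_def by blast
    qed
    define g where "g m = (\<Prod>X\<in>T0. max 0 (f X (m |` X)))" for m
    define fB where "fB m = max 0 (f B m)" for m
    have gC: "g (m |` C) = (\<Prod>X\<in>T0. max 0 (f X (m |` X)))" for m
      unfolding g_def using XC by (intro prod.cong) (auto simp: Int_absorb1)
    have s1: "(\<integral>\<^sup>+ m. ennreal (\<Prod>A\<in>T. f A (m |` A)) \<partial>measure_pmf \<mu>')
      = (\<integral>\<^sup>+ m. ennreal (fB (m |` B) * g (m |` C)) \<partial>measure_pmf \<mu>')"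
    proof (rule nn_integral_cong_AE, unfold AE_measure_pmf_iff, intro ballI)
      fix m assume m: "m \<in> set_pmf \<mu>'"
      have pos: "0 \<le> f X (m |` X)" if X: "X \<in> T" for X
      proof -
        have "X \<subseteq> Y" using X TY by blast
        then have "dom (m |` X) = X" using supp[OF m] by auto
        then show ?thesis using nn X by blast
      qed
      have "(\<Prod>A\<in>T. f A (m |` A)) = f B (m |` B) * (\<Prod>A\<in>T0. f A (m |` A))"
        unfolding T0_def using prod.remove[OF finT B(1)] .
      also have "\<dots> = fB (m |` B) * g (m |` C)"
        unfolding gC fB_def using pos B(1) unfolding T0_def by (auto intro!: prod.cong)
      finally show "ennreal (\<Prod>A\<in>T. f A (m |` A)) = ennreal (fB (m |` B) * g (m |` C))" by simp
    qed
    have moBC: "(mono_mem B fB \<and> mono_mem C g) \<or> (antimono_mem B fB \<and> antimono_mem C g)"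
    proof (cases "\<forall>A\<in>T. mono_mem A (f A)")
      case True
      then show ?thesis unfolding fB_def g_def
        using mono_max[of B "f B"] mono_prod[OF finT0, of C f] XC B(1) unfolding T0_def by auto
    next
      case False
      then have "\<forall>A\<in>T. antimono_mem A (f A)" using mo by auto
      then show ?thesis unfolding fB_def g_def
        using antimono_max[of B "f B"] antimono_prod[OF finT0, of C f] XC B(1) unfolding T0_def by auto
    qed
    have s2: "(\<integral>\<^sup>+ m. ennreal (fB (m |` B) * g (m |` C)) \<partial>measure_pmf \<mu>')
       \<le> (\<integral>\<^sup>+ m. ennreal (fB (m |` B)) \<partial>measure_pmf \<mu>') * (\<integral>\<^sup>+ m. ennreal (g (m |` C)) \<partial>measure_pmf \<mu>')"
      by (rule NA_nn[OF na[folded Y_def] BY BC _ _ moBC])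
         (auto simp: fB_def g_def intro: prod_nonneg)
    define T' where "T' = T0 \<union> (if B0 = {} then {} else {B0})"
    define f' where "f' X = (if X = B0 then (\<lambda>_. 1) else (\<lambda>m. max 0 (f X m)))" for X
    have co': "coarsens T' Sp"
      unfolding coarsens_def
    proof (intro conjI ballI)
      show "is_partition T'" unfolding is_partition_def
      proof (intro conjI ballI impI)
        fix X assume "X \<in> T'" then show "X \<noteq> {}"
          using nonemp unfolding T'_def T0_def by (auto split: if_splits)
      next
        fix X X' assume XX: "X \<in> T'" "X' \<in> T'" "X \<noteq> X'"
        have Tc: "\<And>X. X \<in> T' \<Longrightarrow> X \<in> T0 \<or> X = B0" by (auto simp: T'_def split: if_splits)
        have dB0: "B0 \<inter> X = {}" if "X \<in> T0" for X
        proof -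
          have "X \<in> T" "X \<noteq> B" using that unfolding T0_def by auto
          then have "B \<inter> X = {}" using disj[OF B(1)] by blast
          then show ?thesis unfolding B0_def by blast
        qed
        have T0T: "\<And>X. X \<in> T0 \<Longrightarrow> X \<in> T" unfolding T0_def by blast
        show "X \<inter> X' = {}"
        proof (cases "X \<in> T0")
          case True
          show ?thesis
          proof (cases "X' \<in> T0")
            case True2: True
            show ?thesis using disj[OF T0T[OF True] T0T[OF True2] XX(3)] .
          next
            case False
            then have "X' = B0" using Tc XX(2) by blast
            then show ?thesis using dB0[OF True] by blast
          qed
        next
          case False
          then have "X = B0" using Tc XX(1) by blast
          then have "X' \<in> T0" using Tc XX(2,3) by blast
          then show ?thesis using dB0 \<open>X = B0\<close> by blast
        qed
      qed
      show "\<Union>T' = \<Union>Sp"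
      proof -
        have "\<Union>T = B \<union> C" using B(1) unfolding C_def T0_def by blast
        have yC: "y \<notin> C" using yX unfolding C_def by blast
        have "\<Union>T' = C \<union> B0" unfolding T'_def C_def by (cases "B0 = {}") auto
        also have "\<dots> = \<Union>T - {y}" using \<open>\<Union>T = B \<union> C\<close> yC unfolding B0_def by blast
        also have "\<dots> = \<Union>Sp" using UT yS by blast
        finally show ?thesis .
      qed
      fix X assume X: "X \<in> T'"
      show "\<exists>F\<subseteq>Sp. X = \<Union>F"
      proof (cases "X \<in> T0")
        case True
        then have XT: "X \<in> T" unfolding T0_def by simp
        obtain F where F: "F \<subseteq> Sp \<union> {{y}}" "X = \<Union>F" using bspec[OF fam XT] by blast
        have "{y} \<notin> F" using F yX[OF True] by blast
        then have "F \<subseteq> Sp" using F(1) by blast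
        then show ?thesis using F(2) by blast
      next
        case False
        then have XB: "X = B0" using X unfolding T'_def by (simp split: if_splits)
        obtain F where F: "F \<subseteq> Sp \<union> {{y}}" "B = \<Union>F" using bspec[OF fam B(1)] by blast
        have yS': "\<forall>A\<in>Sp. y \<notin> A" using yS by blast
        have "B0 = \<Union>(F - {{y}})" unfolding B0_def using F yS' by blast
        moreover have "F - {{y}} \<subseteq> Sp" using F(1) by blast
        ultimately show ?thesis using XB by blast
      qed
    qed
    have nn': "\<forall>X\<in>T'. \<forall>m. dom m = X \<longrightarrow> 0 \<le> f' X m" unfolding f'_def by auto
    have Tc': "\<And>X. X \<in> T' \<Longrightarrow> X \<in> T0 \<or> X = B0" by (auto simp: T'_def split: if_splits)
    have f'T0: "\<And>X. X \<in> T0 \<Longrightarrow> f' X = (\<lambda>m. max 0 (f X m))"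
      unfolding f'_def using nonemp B0T0 unfolding T0_def by auto
    have f'B0: "f' B0 = (\<lambda>_. 1)" unfolding f'_def by simp
    have T0T': "\<And>X. X \<in> T0 \<Longrightarrow> X \<in> T" unfolding T0_def by simp
    have mo': "(\<forall>X\<in>T'. mono_mem X (f' X)) \<or> (\<forall>X\<in>T'. antimono_mem X (f' X))"
    proof (cases "\<forall>A\<in>T. mono_mem A (f A)")
      case True
      have "mono_mem X (f' X)" if "X \<in> T'" for X
      proof (cases "X \<in> T0")
        case True2: True
        show ?thesis unfolding f'T0[OF True2] using True T0T'[OF True2] by (simp add: mono_max)
      next
        case False
        then have "X = B0" using Tc' that by blast
        then show ?thesis using f'B0 mono_const by simp
      qed
      then show ?thesis by blast
    next
      case False
      then have anti: "\<forall>A\<in>T. antimono_mem A (f A)" using mo by auto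
      have "antimono_mem X (f' X)" if "X \<in> T'" for X
      proof (cases "X \<in> T0")
        case True2: True
        show ?thesis unfolding f'T0[OF True2] using anti T0T'[OF True2] by (simp add: antimono_max)
      next
        case False
        then have "X = B0" using Tc' that by blast
        then show ?thesis using f'B0 mono_const by simp
      qed
      then show ?thesis by blast
    qed
    have pna: "(\<integral>\<^sup>+ m. ennreal (\<Prod>X\<in>T'. f' X (m |` X)) \<partial>measure_pmf \<mu>1)
        \<le> (\<Prod>X\<in>T'. \<integral>\<^sup>+ m. ennreal (f' X (m |` X)) \<partial>measure_pmf \<mu>1)"
      by (rule PNA_app[OF P1[folded \<mu>1_def] co' nn' mo'])
    have l1: "(\<Prod>X\<in>T'. f' X (m |` X)) = (\<Prod>X\<in>T0. max 0 (f X (m |` X)))" for m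
    proof (cases "B0 = {}")
      case True then show ?thesis unfolding T'_def using f'T0 by (auto intro: prod.cong)
    next
      case False then show ?thesis unfolding T'_def using f'T0 B0T0 finT0
        by (simp add: f'_def prod.insert cong: prod.cong)
    qed
    have r1: "(\<Prod>X\<in>T'. \<integral>\<^sup>+ m. ennreal (f' X (m |` X)) \<partial>measure_pmf \<mu>1)
       = (\<Prod>X\<in>T0. \<integral>\<^sup>+ m. ennreal (max 0 (f X (m |` X))) \<partial>measure_pmf \<mu>1)"
    proof (cases "B0 = {}")
      case True then show ?thesis unfolding T'_def using f'T0 by (auto intro: prod.cong)
    next
      case False then show ?thesis unfolding T'_def using f'T0 B0T0 finT0
        by (simp add: f'_def prod.insert cong: prod.cong)
    qed
    have tr1: "(\<integral>\<^sup>+ m. ennreal (\<Prod>X\<in>T0. max 0 (f X (m |` X))) \<partial>measure_pmf \<mu>1)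
        = (\<integral>\<^sup>+ m. ennreal (g (m |` C)) \<partial>measure_pmf \<mu>')"
      unfolding gC \<mu>1_def using XZ by (intro nn_marg) (auto intro!: prod.cong simp: Int_absorb1)
    have tr2: "(\<integral>\<^sup>+ m. ennreal (max 0 (f X (m |` X))) \<partial>measure_pmf \<mu>1)
        = (\<integral>\<^sup>+ m. ennreal (f X (m |` X)) \<partial>measure_pmf \<mu>')" if "X \<in> T0" for X
    proof -
      have "(\<integral>\<^sup>+ m. ennreal (max 0 (f X (m |` X))) \<partial>measure_pmf \<mu>1)
          = (\<integral>\<^sup>+ m. ennreal (max 0 (f X (m |` X))) \<partial>measure_pmf \<mu>')"
        unfolding \<mu>1_def using XZ[OF that] by (intro nn_marg) (simp add: Int_absorb1)
      then show ?thesis by (simp add: ennreal_max0)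
    qed
    have s3: "(\<integral>\<^sup>+ m. ennreal (g (m |` C)) \<partial>measure_pmf \<mu>')
        \<le> (\<Prod>X\<in>T0. \<integral>\<^sup>+ m. ennreal (f X (m |` X)) \<partial>measure_pmf \<mu>')"
      using pna unfolding l1 r1 tr1 using tr2 by (simp cong: prod.cong)
    have fBe: "(\<integral>\<^sup>+ m. ennreal (fB (m |` B)) \<partial>measure_pmf \<mu>') = (\<integral>\<^sup>+ m. ennreal (f B (m |` B)) \<partial>measure_pmf \<mu>')"
      unfolding fB_def by (simp add: ennreal_max0)
    have "(\<integral>\<^sup>+ m. ennreal (\<Prod>A\<in>T. f A (m |` A)) \<partial>measure_pmf \<mu>')
       \<le> (\<integral>\<^sup>+ m. ennreal (f B (m |` B)) \<partial>measure_pmf \<mu>') * (\<Prod>X\<in>T0. \<integral>\<^sup>+ m. ennreal (f X (m |` X)) \<partial>measure_pmf \<mu>')"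
    proof -
      have "(\<integral>\<^sup>+ m. ennreal (\<Prod>A\<in>T. f A (m |` A)) \<partial>measure_pmf \<mu>')
         \<le> (\<integral>\<^sup>+ m. ennreal (f B (m |` B)) \<partial>measure_pmf \<mu>') * (\<integral>\<^sup>+ m. ennreal (g (m |` C)) \<partial>measure_pmf \<mu>')"
        using s1 s2 fBe by simp
      also have "\<dots> \<le> (\<integral>\<^sup>+ m. ennreal (f B (m |` B)) \<partial>measure_pmf \<mu>') * (\<Prod>X\<in>T0. \<integral>\<^sup>+ m. ennreal (f X (m |` X)) \<partial>measure_pmf \<mu>')"
        by (rule mult_left_mono[OF s3]) simp
      finally show ?thesis .
    qed
    also have "\<dots> = (\<Prod>A\<in>T. \<integral>\<^sup>+ m. ennreal (f A (m |` A)) \<partial>measure_pmf \<mu>')"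
      unfolding T0_def using prod.remove[OF finT B(1), symmetric] .
    finally show "(\<integral>\<^sup>+ m. ennreal (\<Prod>A\<in>T. f A (m |` A)) \<partial>measure_pmf \<mu>')
       \<le> (\<Prod>A\<in>T. \<integral>\<^sup>+ m. ennreal (f A (m |` A)) \<partial>measure_pmf \<mu>')" .
  qed
qed


lemma wf_of_is_dist: "is_dist S \<mu> \<Longrightarrow> wf_dist \<mu>"
  unfolding wf_dist_def using pdom_is_dist by metis

lemma NA_bigstar:
  assumes "NA (y ` {..<Suc n}) \<mu>" "is_dist S \<mu>" "inj_on y {..<Suc n}"
  shows "bigstar (\<lambda>i. atom (y i)) (Suc n) \<sigma> \<mu>"
  using assms
proof (induction n arbitrary: \<mu> S)
  case 0
  then have "y 0 \<in> pdom \<mu>" unfolding NA_def by auto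
  then show ?case by (simp add: atom_def)
next
  case (Suc n)
  define y' where "y' = y (Suc n)"
  define Z where "Z = y ` {..<Suc n}"
  define Y where "Y = insert y' Z"
  have YY: "y ` {..<Suc (Suc n)} = Y" unfolding Y_def Z_def y'_def by (simp add: lessThan_Suc)
  have yZ: "y' \<notin> Z"
  proof
    assume "y' \<in> Z" then obtain x where x: "x < Suc n" "y (Suc n) = y x" unfolding y'_def Z_def by auto
    then have "Suc n = x" using inj_onD[OF Suc.prems(3) x(2)] by simp
    then show False using x by simp
  qed
  have na: "NA Y \<mu>" using Suc.prems(1) YY by simp
  have pS: "pdom \<mu> = S" using pdom_is_dist[OF Suc.prems(2)] .
  have YS: "Y \<subseteq> S" using na pS unfolding NA_def by auto
  define \<mu>' where "\<mu>' = marg Y \<mu>"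
  define \<mu>1 where "\<mu>1 = marg Z \<mu>"
  define \<mu>2 where "\<mu>2 = marg {y'} \<mu>"
  have d': "is_dist Y \<mu>'" using is_dist_marg[OF Suc.prems(2), of Y] YS unfolding \<mu>'_def
    by (simp add: Int_absorb1)
  have d1: "is_dist Z \<mu>1" using is_dist_marg[OF Suc.prems(2), of Z] YS unfolding \<mu>1_def Y_def
    by (simp add: Int_absorb1)
  have d2: "is_dist {y'} \<mu>2" using is_dist_marg[OF Suc.prems(2), of "{y'}"] YS unfolding \<mu>2_def Y_def
    by (simp add: Int_absorb1)
  have p': "pdom \<mu>' = Y" "pdom \<mu>1 = Z" "pdom \<mu>2 = {y'}"
    using pdom_is_dist d' d1 d2 by auto
  have na1: "NA Z \<mu>1" unfolding \<mu>1_def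
    by (rule NA_marg[OF NA_mono[OF na] Suc.prems(2)]) (auto simp: Y_def)
  have IH: "bigstar (\<lambda>i. atom (y i)) (Suc n) \<sigma> \<mu>1"
  proof -
    have inj: "inj_on y {..<Suc n}" by (rule inj_on_subset[OF Suc.prems(3)]) auto
    show ?thesis by (rule Suc.IH[OF na1[unfolded Z_def] d1 inj])
  qed
  have at: "atom (y (Suc n)) \<sigma> \<mu>2" using p'(3) unfolding atom_def y'_def by auto
  have sub: "sub_dist \<mu>' \<mu>" unfolding sub_dist_def using p'(1) pS YS \<mu>'_def by auto
  have m1: "marg Z \<mu>' = \<mu>1" unfolding \<mu>'_def \<mu>1_def marg_marg
    by (simp add: Y_def Int_absorb1 subset_insertI)
  have m2: "marg {y'} \<mu>' = \<mu>2" unfolding \<mu>'_def \<mu>2_def marg_marg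
    by (simp add: Y_def Int_absorb1)
  have na': "NA Y \<mu>'" unfolding \<mu>'_def by (rule NA_marg[OF na Suc.prems(2)]) simp
  have op: "in_oplus \<mu>' \<mu>1 \<mu>2"
    unfolding in_oplus_def
  proof (intro conjI allI impI)
    show "pdom \<mu>1 \<inter> pdom \<mu>2 = {}" using p' yZ by auto
    show "is_dist (pdom \<mu>1 \<union> pdom \<mu>2) \<mu>'" using d' p' unfolding Y_def by (simp add: Un_commute)
    show "marg (pdom \<mu>1) \<mu>' = \<mu>1" using m1 p' by simp
    show "marg (pdom \<mu>2) \<mu>' = \<mu>2" using m2 p' by simp
    fix Sp Tp
    assume pT: "is_partition Tp" "\<Union>Tp \<subseteq> pdom \<mu>2" and PS: "PNA Sp \<mu>1"
    show "PNA (Sp \<union> Tp) \<mu>'"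
    proof (cases "\<Union>Tp = {}")
      case True
      have ne: "\<forall>A\<in>Tp. A \<noteq> {}" using pT(1) unfolding is_partition_def by blast
      have "Tp = {}"
      proof (rule ccontr)
        assume "Tp \<noteq> {}" then obtain X where "X \<in> Tp" by blast
        then show False using ne True by blast
      qed
      moreover have "sub_dist \<mu>1 \<mu>'" unfolding sub_dist_def by (simp add: p' m1 Y_def subset_insertI)
      ultimately show ?thesis using PNA_sub[OF PS] by simp
    next
      case False
      then have "\<Union>Tp = {y'}" using pT(2) p'(3) by (metis subset_singletonD)
      then have "Tp = {{y'}}" by (rule part_single[OF pT(1)])
      moreover have "PNA (Sp \<union> {{y'}}) \<mu>'"
        by (rule PNA_extend[OF na'[unfolded Y_def] d'[unfolded Y_def] yZ]) (simp add: m1 PS)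
      ultimately show ?thesis by simp
    qed
  qed
  show ?case
    unfolding bigstar.simps star_def
    using wf_of_is_dist[OF d'] wf_of_is_dist[OF d1] wf_of_is_dist[OF d2] sub op IH at by blast
qed

theorem mainTheorem12:
  fixes DV RV :: "'v set" and S :: "'v set" and \<mu> :: "'v dist"
    and y :: "nat \<Rightarrow> 'v" and K :: nat
  assumes "DV \<inter> RV = {}" and "DV \<union> RV = UNIV"
    and "finite S" and "S \<subseteq> RV" and "is_dist S \<mu>"
    and "K \<ge> 1" and "inj_on y {..<K}" and "y ` {..<K} \<subseteq> RV"
  shows "NA (y ` {..<K}) \<mu> \<longleftrightarrow>
           (\<forall>\<sigma> :: 'v mem. finite (dom \<sigma>) \<longrightarrow> dom \<sigma> \<subseteq> DV \<longrightarrow>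
              bigstar (\<lambda>i. atom (y i)) K \<sigma> \<mu>)"
proof -
  obtain n where K: "K = Suc n" using assms(6) by (cases K) auto
  show ?thesis
  proof
    assume "NA (y ` {..<K}) \<mu>"
    then show "\<forall>\<sigma> :: 'v mem. finite (dom \<sigma>) \<longrightarrow> dom \<sigma> \<subseteq> DV \<longrightarrow> bigstar (\<lambda>i. atom (y i)) K \<sigma> \<mu>"
      using NA_bigstar[of y n \<mu> S] assms(5,7) K by auto
  next
    assume "\<forall>\<sigma> :: 'v mem. finite (dom \<sigma>) \<longrightarrow> dom \<sigma> \<subseteq> DV \<longrightarrow> bigstar (\<lambda>i. atom (y i)) K \<sigma> \<mu>"
    then have "bigstar (\<lambda>i. atom (y i)) (Suc n) Map.empty \<mu>" using K by auto
    then have "PNA ((\<lambda>i. {y i}) ` {..<Suc n}) \<mu>" by (intro bigstar_PNA) auto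
    then have "PNA ((\<lambda>x. {x}) ` (y ` {..<K})) \<mu>" using K by (simp add: image_image)
    then show "NA (y ` {..<K}) \<mu>" by (rule PNA_NA)
  qed
qed


end
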